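(* Let $Y$ be a finite connected simple undirected graph with a cycle-edge $e=\{v,w\}$, let $O\in\mathsf{Acyc}(Y)$, and let $\mathbf{c}=c_1c_2\cdots c_m$ be a click-sequence for $O$ that contains every vertex of $\mathcal{I}(O)$ at least once and has $c_1=v$. Then every vertex of $\mathcal{I}(O)$ appears in $\mathbf{c}$ before any vertex of $\mathcal{I}(O)$ appears for the second time.
   Context: $\mathsf{Acyc}(Y)$ is the set of acyclic orientations; $i\leq_O j$ iff there is a directed path from $i$ to $j$ in $O$. $\mathcal{I}(O)=\{a: v\leq_O a\leq_O w\}$ if $v\leq_O w$, and $\mathcal{I}(O)=\varnothing$ otherwise. A click at a vertex $x$ which is a source reverses all edges incident to $x$. A click-sequence for $O$ is a sequence of vertices $c_1,\dots,c_m$ such that for each $i$, $c_i$ is a source of the orientation obtained from $O$ by successively clicking $c_1,\dots,c_{i-1}$; $\mathbf{c}(O)$ denotes the resulting orientation after all $m$ clicks. *)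

theory Defs
  imports Main
begin

definition simple_graph :: "'a set \<Rightarrow> 'a set set \<Rightarrow> bool" where
  "simple_graph V E \<longleftrightarrow> finite V \<and> (\<forall>e\<in>E. \<exists>a b. e = {a, b} \<and> a \<noteq> b \<and> a \<in> V \<and> b \<in> V)"

definition adj_rel :: "'a set set \<Rightarrow> ('a \<times> 'a) set" where
  "adj_rel E = {(a, b). {a, b} \<in> E}"

definition connected_graph :: "'a set \<Rightarrow> 'a set set \<Rightarrow> bool" where
  "connected_graph V E \<longleftrightarrow> (\<forall>a\<in>V. \<forall>b\<in>V. (a, b) \<in> (adj_rel E)\<^sup>*)"

definition walk :: "'a set set \<Rightarrow> 'a list \<Rightarrow> bool" where
  "walk E ys \<longleftrightarrow> (\<forall>i. Suc i < length ys \<longrightarrow> {ys ! i, ys ! Suc i} \<in> E)"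

definition cycle_edge :: "'a set \<Rightarrow> 'a set set \<Rightarrow> 'a \<Rightarrow> 'a \<Rightarrow> bool" where
  "cycle_edge V E v w \<longleftrightarrow> {v, w} \<in> E \<and>
     (\<exists>xs. xs \<noteq> [] \<and> distinct (v # w # xs) \<and> set xs \<subseteq> V \<and> walk E (v # w # xs @ [v]))"

definition orientation :: "'a set set \<Rightarrow> ('a \<times> 'a) set \<Rightarrow> bool" where
  "orientation E Ori \<longleftrightarrow> (\<forall>(a, b)\<in>Ori. {a, b} \<in> E) \<and>
     (\<forall>a b. {a, b} \<in> E \<longrightarrow> ((a, b) \<in> Ori \<longleftrightarrow> (b, a) \<notin> Ori))"

definition Acyc :: "'a set set \<Rightarrow> ('a \<times> 'a) set set" where
  "Acyc E = {Ori. orientation E Ori \<and> acyclic Ori}"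

definition leq_O :: "('a \<times> 'a) set \<Rightarrow> 'a \<Rightarrow> 'a \<Rightarrow> bool" where
  "leq_O Ori i j \<longleftrightarrow> (i, j) \<in> Ori\<^sup>*"

definition interval :: "('a \<times> 'a) set \<Rightarrow> 'a \<Rightarrow> 'a \<Rightarrow> 'a set" where
  "interval Ori v w = (if leq_O Ori v w then {a. leq_O Ori v a \<and> leq_O Ori a w} else {})"

definition is_source :: "('a \<times> 'a) set \<Rightarrow> 'a \<Rightarrow> bool" where
  "is_source Ori x \<longleftrightarrow> (\<forall>y. (y, x) \<notin> Ori)"

text \<open>Clicking x reverses all edges incident to x.\<close>
definition click :: "('a \<times> 'a) set \<Rightarrow> 'a \<Rightarrow> ('a \<times> 'a) set" where
  "click Ori x = {(a, b). ((a, b) \<in> Ori \<and> a \<noteq> x \<and> b \<noteq> x) \<or> ((b, a) \<in> Ori \<and> (a = x \<or> b = x))}"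

fun click_seq :: "'a set \<Rightarrow> ('a \<times> 'a) set \<Rightarrow> 'a list \<Rightarrow> bool" where
  "click_seq V Ori [] = True"
| "click_seq V Ori (c # cs) = (c \<in> V \<and> is_source Ori c \<and> click_seq V (click Ori c) cs)"

end

theory Submission
  imports Defs
begin

lemma alt_lemma:
  assumes "a \<noteq> b" "((a,b) \<in> Ori) \<noteq> ((b,a) \<in> Ori)" "click_seq V Ori cs"
  shows "((a,b) \<in> Ori \<longrightarrow> count_list (take n cs) b \<le> count_list (take n cs) a
            \<and> count_list (take n cs) a \<le> count_list (take n cs) b + 1) \<and>
         ((b,a) \<in> Ori \<longrightarrow> count_list (take n cs) a \<le> count_list (take n cs) b
            \<and> count_list (take n cs) b \<le> count_list (take n cs) a + 1)"
  using assms(2,3)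
proof (induction cs arbitrary: Ori n)
  case Nil
  then show ?case by simp
next
  case (Cons c cs)
  show ?case
  proof (cases n)
    case 0
    then show ?thesis by simp
  next
    case (Suc m)
    have src: "is_source Ori c" and cs: "click_seq V (click Ori c) cs" using Cons.prems by auto
    have x: "((a,b) \<in> click Ori c) \<noteq> ((b,a) \<in> click Ori c)"
      using Cons.prems(1) assms(1) unfolding click_def by auto
    note IH = Cons.IH[OF x cs, of m]
    show ?thesis
    proof (cases "c = a")
      case True
      then have "(a,b) \<in> Ori" "(b,a) \<notin> Ori" using src Cons.prems(1) unfolding is_source_def by auto
      moreover have "(b,a) \<in> click Ori c" using True calculation unfolding click_def by auto
      ultimately show ?thesis using IH True assms(1) Suc by auto
    next
      case False
      show ?thesis
      proof (cases "c = b")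
        case True
        then have "(b,a) \<in> Ori" "(a,b) \<notin> Ori" using src Cons.prems(1) unfolding is_source_def by auto
        moreover have "(a,b) \<in> click Ori c" using True calculation unfolding click_def by auto
        ultimately show ?thesis using IH True assms(1) Suc by auto
      next
        case False2: False
        have "((a,b) \<in> click Ori c) = ((a,b) \<in> Ori)" "((b,a) \<in> click Ori c) = ((b,a) \<in> Ori)"
          using False False2 unfolding click_def by auto
        then show ?thesis using IH False False2 Suc by auto
      qed
    qed
  qed
qed

lemma edge_le:
  assumes "Ori \<in> Acyc E" "click_seq V Ori cs" "(a,b) \<in> Ori"
  shows "count_list (take n cs) b \<le> count_list (take n cs) a
            \<and> count_list (take n cs) a \<le> count_list (take n cs) b + 1"
proof -
  have or: "orientation E Ori" and ac: "acyclic Ori" using assms(1) unfolding Acyc_def by auto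
  have ab: "a \<noteq> b" using ac assms(3) unfolding acyclic_def by auto
  have "{a,b} \<in> E" using or assms(3) unfolding orientation_def by auto
  then have "((a,b) \<in> Ori) \<noteq> ((b,a) \<in> Ori)" using or unfolding orientation_def by auto
  then show ?thesis using alt_lemma[OF ab _ assms(2), of n] assms(3) by auto
qed

lemma path_le:
  assumes "Ori \<in> Acyc E" "click_seq V Ori cs" "(a,b) \<in> Ori\<^sup>*"
  shows "count_list (take n cs) b \<le> count_list (take n cs) a"
  using assms(3)
proof (induction rule: rtrancl_induct)
  case base
  then show ?case by simp
next
  case (step y z)
  then show ?case using edge_le[OF assms(1,2) step(2), of n] by linarith
qed

theorem proposition7:
  fixes V :: "'a set" and E :: "'a set set" and v w :: 'a
    and Ori :: "('a \<times> 'a) set" and cs :: "'a list"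
  assumes "simple_graph V E"
    and "connected_graph V E"
    and "cycle_edge V E v w"
    and "Ori \<in> Acyc E"
    and "click_seq V Ori cs"
    and "interval Ori v w \<subseteq> set cs"
    and "cs \<noteq> []" and "hd cs = v"
  shows "\<forall>j < length cs. cs ! j \<in> interval Ori v w \<and> (\<exists>i<j. cs ! i = cs ! j) \<longrightarrow>
           (\<forall>a \<in> interval Ori v w. \<exists>k<j. cs ! k = a)"
proof (intro allI impI ballI)
  fix j a
  assume j: "j < length cs" and H: "cs ! j \<in> interval Ori v w \<and> (\<exists>i<j. cs ! i = cs ! j)"
    and a: "a \<in> interval Ori v w"
  define x where "x = cs ! j"
  obtain i where i: "i < j" "cs ! i = x" using H x_def by auto
  have le: "leq_O Ori v w" using a unfolding interval_def by (auto split: if_splits)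
  have vx: "(v,x) \<in> Ori\<^sup>*" using H le unfolding x_def interval_def leq_O_def by auto
  have aw: "(a,w) \<in> Ori\<^sup>*" using a le unfolding interval_def leq_O_def by auto
  obtain c cs' where ccs: "cs = c # cs'" using assms(7) by (cases cs) auto
  have vsrc: "is_source Ori v" using assms(5,8) ccs by auto
  have "{v,w} \<in> E" using assms(3) unfolding cycle_edge_def by auto
  moreover have "orientation E Ori" using assms(4) unfolding Acyc_def by auto
  ultimately have vw: "(v,w) \<in> Ori" using vsrc unfolding orientation_def is_source_def by blast
  let ?T = "take (Suc j) cs"
  have T: "?T = take j cs @ [x]" using j x_def by (simp add: take_Suc_conv_app_nth)
  have "x \<in> set (take j cs)" using i j by (metis in_set_conv_nth length_take min.absorb4 nth_take order.strict_trans)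
  then have "count_list (take j cs) x \<ge> 1" using count_list_0_iff[of "take j cs" x] by linarith
  then have cx: "count_list ?T x \<ge> 2" using T by simp
  have "count_list ?T x \<le> count_list ?T v" using path_le[OF assms(4,5) vx] .
  moreover have "count_list ?T v \<le> count_list ?T w + 1" using edge_le[OF assms(4,5) vw] by blast
  moreover have "count_list ?T w \<le> count_list ?T a" using path_le[OF assms(4,5) aw] .
  ultimately have ca: "count_list ?T a \<ge> 1" using cx by linarith
  show "\<exists>k<j. cs ! k = a"
  proof (cases "a = x")
    case True
    then show ?thesis using i by auto
  next
    case False
    then have "count_list (take j cs) a \<ge> 1" using ca T by simp
    then have "a \<in> set (take j cs)" using count_list_0_iff[of "take j cs" a] by auto
    then obtain k where "k < length (take j cs)" "take j cs ! k = a" by (metis in_set_conv_nth)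
    then show ?thesis by auto
  qed
qed

end
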